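(* For each $n \geq 2$ let $\{X_{n,i}; 1 \leq i \leq n \}$ be i.i.d. real-valued random variables such that $\mathbb{E}X_{n, 1} = 0$ and $\lim_{n \to \infty} \mathbb{E}X_{n,1}^{2} = \sigma^{2} \in (0, \infty)$. Let $\rho\ge0$, $g \in \mathcal{V}_{\rho}$, and suppose there is a sequence of positive constants $\{\tau_{n}; n \geq 2\}$ with $\lim_{n \to \infty} \tau_{n} = 0$ and $|X_{n,1}| \leq \tau_{n} \sqrt{n/g(\log n)}$ almost surely for each $n\ge2$. Then for all $r>0$, \[ \lim_{n \to \infty} \frac{\log \mathbb{P}\left(\sum_{i=1}^{n} X_{n,i} > r \sqrt{n g(\log n)} \right)}{g(\log n)} = - \frac{r^{2}}{2\sigma^{2}},\quad \lim_{n \to \infty} \frac{\log \mathbb{P}\left(\sum_{i=1}^{n} X_{n,i} < - r \sqrt{n g(\log n)} \right)}{g(\log n)} = - \frac{r^{2}}{2\sigma^{2}}, \] and \[ \lim_{n \to \infty} \frac{\log \mathbb{P}\left(\left|\sum_{i=1}^{n} X_{n,i} \right| > r \sqrt{n g(\log n)} \right)}{g(\log n)} = - \frac{r^{2}}{2\sigma^{2}}. \]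
   Context: For $\rho\ge 0$, $\mathcal{V}_{\rho}$ denotes the set of all nondecreasing functions $g:[0,\infty)\to[0,\infty)$ regularly varying at infinity with index $\rho$ (i.e. $\lim_{t\to\infty} g(xt)/g(t)=x^\rho$ for all $x>0$) with $\lim_{t\to\infty}g(t)=\infty$. $\log$ is the natural logarithm. *)

theory Defs
  imports "HOL-Probability.Probability"
begin

text \<open>The class V_rho: nondecreasing functions g : [0,inf) -> [0,inf), regularly varying
  at infinity with index rho, with g t -> infinity.  Only values on [0,inf) matter.\<close>
definition regvar_class :: "real \<Rightarrow> (real \<Rightarrow> real) \<Rightarrow> bool" where
  "regvar_class \<rho> g \<longleftrightarrow>
     mono_on {0..} g \<and> (\<forall>t\<ge>0. g t \<ge> 0) \<and>
     (\<forall>x>0. ((\<lambda>t. g (x * t) / g t) \<longlongrightarrow> x powr \<rho>) at_top) \<and>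
     filterlim g at_top at_top"

end

theory Submission
  imports Defs
begin


lemma taylor3:
  fixes x :: real assumes "\<bar>x\<bar> \<le> 1"
  shows "\<bar>exp x - (1 + x + x\<^sup>2/2)\<bar> \<le> \<bar>x\<bar>^3"
proof -
  obtain t where t: "\<bar>t\<bar> \<le> \<bar>x\<bar>" "exp x = (\<Sum>m<3. (x ^ m) / fact m) + (exp t / fact 3) * x ^ 3"
    using Maclaurin_exp_le[of x 3] by blast
  have s: "(\<Sum>m<3. (x ^ m) / fact m) = 1 + x + x\<^sup>2/2"
    by (simp add: eval_nat_numeral fact_numeral power2_eq_square)
  have "exp t \<le> exp 1" using t(1) assms by simp
  also have "exp (1::real) \<le> 6" using exp_le by simp
  finally have e: "exp t \<le> 6" .
  have "\<bar>exp x - (1 + x + x\<^sup>2/2)\<bar> = exp t / 6 * \<bar>x\<bar>^3"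
    using t(2) s by (simp add: fact_numeral abs_mult power_abs)
  also have "\<dots> \<le> \<bar>x\<bar>^3" using mult_right_mono[OF e, of "\<bar>x\<bar>^3"] by simp
  finally show ?thesis .
qed

lemma pointwise_lower:
  fixes l m a a' y :: real
  assumes "0 \<le> l" "0 \<le> m" "a \<le> a'"
  shows "exp (l*y) - exp (m*a) * exp ((l-m)*y) - exp (-(m*a')) * exp ((l+m)*y)
         \<le> exp (l*a') * indicator {x. x > a} y"
proof -
  have e1: "exp (m*a) * exp ((l-m)*y) = exp (l*y) * exp (m*(a-y))"
  proof -
    have "exp (m*a) * exp ((l-m)*y) = exp (m*a + (l-m)*y)" by (rule exp_add[symmetric])
    also have "m*a + (l-m)*y = l*y + m*(a-y)" by (simp add: algebra_simps)
    also have "exp (l*y + m*(a-y)) = exp (l*y) * exp (m*(a-y))" by (rule exp_add)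
    finally show ?thesis .
  qed
  have e2: "exp (-(m*a')) * exp ((l+m)*y) = exp (l*y) * exp (m*(y-a'))"
  proof -
    have "exp (-(m*a')) * exp ((l+m)*y) = exp (-(m*a') + (l+m)*y)" by (rule exp_add[symmetric])
    also have "-(m*a') + (l+m)*y = l*y + m*(y-a')" by (simp add: algebra_simps)
    also have "exp (l*y + m*(y-a')) = exp (l*y) * exp (m*(y-a'))" by (rule exp_add)
    finally show ?thesis .
  qed
  show ?thesis
  proof (cases "y > a")
    case True
    show ?thesis
    proof (cases "y \<le> a'")
      case True
      have "exp (l*y) \<le> exp (l*a')" using True assms by (simp add: mult_left_mono)
      moreover have "0 \<le> exp (m*a) * exp ((l-m)*y)" "0 \<le> exp (-(m*a')) * exp ((l+m)*y)" by auto
      moreover have "exp (l*a') * indicator {x. x > a} y = exp (l*a')" using \<open>y > a\<close> by simp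
      ultimately show ?thesis by linarith
    next
      case False
      have "1 \<le> exp (m*(y-a'))" using False assms by simp
      hence "exp (l*y) \<le> exp (l*y) * exp (m*(y-a'))" by simp
      moreover have "0 \<le> exp (m*a) * exp ((l-m)*y)" by auto
      moreover have "exp (l*a') * indicator {x. x > a} y = exp (l*a')" using \<open>y > a\<close> by simp
      moreover have "0 \<le> exp (l*a')" by simp
      ultimately show ?thesis using e2 by linarith
    qed
  next
    case False
    have "1 \<le> exp (m*(a-y))" using False assms by simp
    hence "exp (l*y) \<le> exp (l*y) * exp (m*(a-y))" by simp
    moreover have "0 \<le> exp (-(m*a')) * exp ((l+m)*y)" by auto
    moreover have "exp (l*a') * indicator {x. x > a} y = 0" using False by simp
    ultimately show ?thesis using e1 by linarith
  qed
qed

lemma pointwise_upper: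
  fixes l a y :: real
  assumes "0 \<le> l"
  shows "exp (l*a) * indicator {x. x > a} y \<le> exp (l*y)"
  using assms by (auto simp: indicator_def mult_left_mono)

locale mdp =
  fixes M :: "'a measure" and X :: "nat \<Rightarrow> nat \<Rightarrow> 'a \<Rightarrow> real"
    and \<sigma> \<rho> :: real and g :: "real \<Rightarrow> real" and \<tau> :: "nat \<Rightarrow> real"
  assumes P: "prob_space M"
    and meas: "\<And>n i. n \<ge> 2 \<Longrightarrow> i \<in> {1..n} \<Longrightarrow> X n i \<in> borel_measurable M"
    and indep: "\<And>n. n \<ge> 2 \<Longrightarrow> prob_space.indep_vars M (\<lambda>_. borel) (X n) {1..n}"
    and ident: "\<And>n i. n \<ge> 2 \<Longrightarrow> i \<in> {1..n} \<Longrightarrow> distr M borel (X n i) = distr M borel (X n 1)"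
    and mean0: "\<And>n. n \<ge> 2 \<Longrightarrow> integral\<^sup>L M (X n 1) = 0"
    and var: "((\<lambda>n. integral\<^sup>L M (\<lambda>\<omega>. (X n 1 \<omega>)\<^sup>2)) \<longlongrightarrow> \<sigma>\<^sup>2) sequentially"
    and \<sigma>pos: "\<sigma> > 0"
    and g: "regvar_class \<rho> g"
    and \<tau>pos: "\<And>n. n \<ge> 2 \<Longrightarrow> \<tau> n > 0"
    and \<tau>lim: "\<tau> \<longlonglongrightarrow> 0"
    and bound: "\<And>n. n \<ge> 2 \<Longrightarrow>
                  AE \<omega> in M. \<bar>X n 1 \<omega>\<bar> \<le> \<tau> n * sqrt (real n / g (ln (real n)))"
begin

sublocale prob_space M by (rule P)

definition "G n = g (ln (real n))"
definition "c n = \<tau> n * sqrt (real n / G n)"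
definition "v n = integral\<^sup>L M (\<lambda>\<omega>. (X n 1 \<omega>)\<^sup>2)"
definition "S n \<omega> = (\<Sum>i=1..n. X n i \<omega>)"
definition "mgf n t = integral\<^sup>L M (\<lambda>\<omega>. exp (t * X n 1 \<omega>))"
definition "E n \<theta> = integral\<^sup>L M (\<lambda>\<omega>. exp (\<theta> * sqrt (G n / real n) * S n \<omega>))"

lemma G_top: "filterlim G at_top sequentially"
proof -
  have "filterlim (\<lambda>n. ln (real n)) at_top sequentially"
    by (rule filterlim_compose[OF ln_at_top filterlim_real_sequentially])
  moreover have "filterlim g at_top at_top" using g unfolding regvar_class_def by blast
  ultimately show ?thesis unfolding G_def by (rule filterlim_compose[rotated])
qed

lemma G_pos: "eventually (\<lambda>n. G n > 0) sequentially"
  using G_top unfolding filterlim_at_top_dense by blast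

lemma bound': "n \<ge> 2 \<Longrightarrow> AE \<omega> in M. \<bar>X n 1 \<omega>\<bar> \<le> c n"
  using bound unfolding c_def G_def by blast

lemma int_X1:
  fixes f :: "real \<Rightarrow> real" and B :: real
  assumes n: "n \<ge> 2" and f: "f \<in> borel_measurable borel" and B: "\<And>x. \<bar>x\<bar> \<le> c n \<Longrightarrow> \<bar>f x\<bar> \<le> B"
  shows "integrable M (\<lambda>\<omega>. f (X n 1 \<omega>))"
proof (rule integrable_const_bound[where B=B])
  show "AE x in M. norm (f (X n 1 x)) \<le> B" using bound'[OF n] by eventually_elim (use B in auto)
  show "(\<lambda>\<omega>. f (X n 1 \<omega>)) \<in> borel_measurable M"
    using measurable_compose[OF meas[OF n] f] n by (simp add: o_def)
qed

lemma distr_eq_int: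
  fixes f :: "real \<Rightarrow> real"
  assumes n: "n \<ge> 2" and i: "i \<in> {1..n}" and f: "f \<in> borel_measurable borel"
  shows "integrable M (\<lambda>\<omega>. f (X n i \<omega>)) = integrable M (\<lambda>\<omega>. f (X n 1 \<omega>))"
    and "integral\<^sup>L M (\<lambda>\<omega>. f (X n i \<omega>)) = integral\<^sup>L M (\<lambda>\<omega>. f (X n 1 \<omega>))"
proof -
  have m1: "X n 1 \<in> borel_measurable M" using meas n by auto
  have mi: "X n i \<in> borel_measurable M" using meas n i by auto
  show "integrable M (\<lambda>\<omega>. f (X n i \<omega>)) = integrable M (\<lambda>\<omega>. f (X n 1 \<omega>))"
    using integrable_distr_eq[OF mi f] integrable_distr_eq[OF m1 f] ident[OF n i] by simp
  show "integral\<^sup>L M (\<lambda>\<omega>. f (X n i \<omega>)) = integral\<^sup>L M (\<lambda>\<omega>. f (X n 1 \<omega>))"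
    using integral_distr[OF mi f] integral_distr[OF m1 f] ident[OF n i] by simp
qed

lemma int_exp1: "n \<ge> 2 \<Longrightarrow> integrable M (\<lambda>\<omega>. exp (t * X n 1 \<omega>))"
proof (rule int_X1[where B="exp (\<bar>t\<bar> * c n)"])
  fix x :: real assume "\<bar>x\<bar> \<le> c n"
  have "t * x \<le> \<bar>t * x\<bar>" by (rule abs_ge_self)
  also have "\<dots> = \<bar>t\<bar> * \<bar>x\<bar>" by (rule abs_mult)
  also have "\<dots> \<le> \<bar>t\<bar> * c n" using \<open>\<bar>x\<bar> \<le> c n\<close> by (rule mult_left_mono) simp
  finally have "t * x \<le> \<bar>t\<bar> * c n" .
  thus "\<bar>exp (t * x)\<bar> \<le> exp (\<bar>t\<bar> * c n)" by simp
qed auto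

lemma prod_mgf:
  assumes n: "n \<ge> 2"
  shows "integral\<^sup>L M (\<lambda>\<omega>. exp (t * S n \<omega>)) = mgf n t ^ n"
    and "integrable M (\<lambda>\<omega>. exp (t * S n \<omega>))"
proof -
  have eq: "exp (t * S n \<omega>) = (\<Prod>i\<in>{1..n}. exp (t * X n i \<omega>))" for \<omega>
    unfolding S_def sum_distrib_left exp_sum[OF finite_atLeastAtMost] ..
  have ind: "indep_vars (\<lambda>_. borel) (\<lambda>i \<omega>. exp (t * X n i \<omega>)) {1..n}"
    by (rule indep_vars_compose2[OF indep[OF n]]) auto
  have mexp: "(\<lambda>x. exp (t*x)) \<in> borel_measurable borel" by simp
  have int: "integrable M (\<lambda>\<omega>. exp (t * X n i \<omega>))" if "i \<in> {1..n}" for i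
    using distr_eq_int(1)[OF n that mexp] int_exp1[OF n, of t] by simp
  have "integral\<^sup>L M (\<lambda>\<omega>. exp (t * S n \<omega>)) = (\<Prod>i\<in>{1..n}. integral\<^sup>L M (\<lambda>\<omega>. exp (t * X n i \<omega>)))"
    unfolding eq by (rule indep_vars_lebesgue_integral[OF _ ind int]) auto
  also have "\<dots> = (\<Prod>i\<in>{1..n}. mgf n t)"
  proof (rule prod.cong[OF refl])
    fix i assume "i \<in> {1..n}"
    from distr_eq_int(2)[OF n this mexp] show "integral\<^sup>L M (\<lambda>\<omega>. exp (t * X n i \<omega>)) = mgf n t"
      unfolding mgf_def .
  qed
  finally show "integral\<^sup>L M (\<lambda>\<omega>. exp (t * S n \<omega>)) = mgf n t ^ n" by simp
  show "integrable M (\<lambda>\<omega>. exp (t * S n \<omega>))"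
    unfolding eq by (rule indep_vars_integrable[OF _ ind int]) auto
qed

lemma c_nonneg: "n \<ge> 2 \<Longrightarrow> G n > 0 \<Longrightarrow> c n \<ge> 0"
  using \<tau>pos[of n] unfolding c_def by simp

lemma intX: "n \<ge> 2 \<Longrightarrow> integrable M (X n 1)"
  using int_X1[of n "\<lambda>x. x" "c n"] by simp

lemma intX2: "n \<ge> 2 \<Longrightarrow> integrable M (\<lambda>\<omega>. (X n 1 \<omega>)\<^sup>2)"
proof (rule int_X1[of n "\<lambda>x. x^2" "(c n)^2"])
  fix x :: real assume "\<bar>x\<bar> \<le> c n"
  hence "\<bar>x\<bar>^2 \<le> (c n)^2" by (intro power_mono) auto
  thus "\<bar>x^2\<bar> \<le> (c n)^2" by simp
qed auto

lemma v_le: assumes n: "n \<ge> 2" shows "v n \<le> (c n)^2"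
proof -
  have "v n \<le> integral\<^sup>L M (\<lambda>\<omega>. (c n)^2)"
    unfolding v_def
  proof (rule integral_mono_AE[OF intX2[OF n]])
    show "AE x in M. (X n 1 x)\<^sup>2 \<le> (c n)\<^sup>2" using bound'[OF n]
    proof eventually_elim
      fix x assume "\<bar>X n 1 x\<bar> \<le> c n"
      hence "\<bar>X n 1 x\<bar>^2 \<le> (c n)^2" by (intro power_mono) auto
      thus "(X n 1 x)\<^sup>2 \<le> (c n)\<^sup>2" by simp
    qed
  qed auto
  thus ?thesis using P[THEN prob_space.prob_space] by simp
qed

lemma v_nonneg: "v n \<ge> 0"
  unfolding v_def by simp

lemma mgf_expand:
  assumes n: "n \<ge> 2" and t: "\<bar>t\<bar> * c n \<le> 1"
  shows "\<bar>mgf n t - 1 - t^2 * v n / 2\<bar> \<le> \<bar>t\<bar> * c n * (t^2 * v n)"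
proof -
  define h where "h \<omega> = exp (t * X n 1 \<omega>) - 1 - t * X n 1 \<omega> - t^2/2 * (X n 1 \<omega>)^2" for \<omega>
  have iE: "integrable M (\<lambda>\<omega>. exp (t * X n 1 \<omega>))" by (rule int_exp1[OF n])
  have iX: "integrable M (\<lambda>\<omega>. X n 1 \<omega>)" using intX[OF n] by simp
  have iX2: "integrable M (\<lambda>\<omega>. (X n 1 \<omega>)^2)" by (rule intX2[OF n])
  have ih: "integrable M h" unfolding h_def using iE iX iX2 by auto
  have key: "integral\<^sup>L M h = mgf n t - 1 - t^2 * v n / 2"
    unfolding h_def mgf_def v_def using iE iX iX2 mean0[OF n] P[THEN prob_space.prob_space] by simp
  have "\<bar>integral\<^sup>L M h\<bar> \<le> integral\<^sup>L M (\<lambda>\<omega>. \<bar>h \<omega>\<bar>)"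
    by (rule integral_abs_bound)
  also have "\<dots> \<le> integral\<^sup>L M (\<lambda>\<omega>. \<bar>t\<bar> * c n * t^2 * (X n 1 \<omega>)^2)"
  proof (rule integral_mono_AE)
    show "integrable M (\<lambda>\<omega>. \<bar>h \<omega>\<bar>)" using ih by auto
    show "integrable M (\<lambda>\<omega>. \<bar>t\<bar> * c n * t^2 * (X n 1 \<omega>)^2)" using iX2 by auto
    show "AE \<omega> in M. \<bar>h \<omega>\<bar> \<le> \<bar>t\<bar> * c n * t^2 * (X n 1 \<omega>)^2"
      using bound'[OF n]
    proof eventually_elim
      fix \<omega> assume b: "\<bar>X n 1 \<omega>\<bar> \<le> c n"
      define x where "x = X n 1 \<omega>"
      have b': "\<bar>x\<bar> \<le> c n" using b x_def by simp
      have tx: "\<bar>t * x\<bar> \<le> \<bar>t\<bar> * c n" using b' by (simp add: abs_mult mult_left_mono)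
      have "\<bar>h \<omega>\<bar> = \<bar>exp (t*x) - (1 + t*x + (t*x)\<^sup>2/2)\<bar>"
        unfolding h_def x_def by (simp add: power_mult_distrib algebra_simps)
      also have "\<dots> \<le> \<bar>t*x\<bar>^3" using tx t by (intro taylor3) simp
      also have "\<bar>t*x\<bar>^3 = \<bar>t*x\<bar> * (t^2 * x^2)" by (simp add: power3_eq_cube power2_eq_square abs_mult algebra_simps)
      also have "\<dots> \<le> \<bar>t\<bar> * c n * (t^2 * x^2)" using tx by (intro mult_right_mono) auto
      finally show "\<bar>h \<omega>\<bar> \<le> \<bar>t\<bar> * c n * t^2 * (X n 1 \<omega>)^2" unfolding x_def by (simp add: algebra_simps)
    qed
  qed
  also have "\<dots> = \<bar>t\<bar> * c n * (t^2 * v n)" unfolding v_def by simp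
  finally show ?thesis using key by simp
qed



lemma Lambda_lim:
  "((\<lambda>n. ln (E n \<theta>) / G n) \<longlongrightarrow> \<theta>^2 * \<sigma>^2 / 2) sequentially \<and> eventually (\<lambda>n. E n \<theta> > 0) sequentially"
proof -
  define t where "t n = \<theta> * sqrt (G n / real n)" for n
  define z where "z n = mgf n (t n) - 1" for n
  define w where "w n = real n * z n / G n" for n
  have tl: "((\<lambda>n. \<bar>\<theta>\<bar> * \<tau> n) \<longlongrightarrow> 0) sequentially"
    using tendsto_mult[OF tendsto_const \<tau>lim, of "\<bar>\<theta>\<bar>"] by simp
  have ev: "eventually (\<lambda>n. n \<ge> 2 \<and> G n > 0 \<and> \<bar>\<theta>\<bar> * \<tau> n \<le> 1) sequentially"
    using eventually_ge_at_top[of 2] G_pos order_tendstoD(2)[OF tl zero_less_one]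
    by eventually_elim auto
  have facts: "\<bar>w n - \<theta>^2 * v n / 2\<bar> \<le> \<bar>\<theta>\<bar>^3 * \<tau> n * v n \<and> \<bar>z n\<bar> \<le> 3/2 * \<theta>^2 * (\<tau> n)^2
      \<and> E n \<theta> = (1 + z n) ^ n"
    if n: "n \<ge> 2" and Gp: "G n > 0" and th: "\<bar>\<theta>\<bar> * \<tau> n \<le> 1" for n
  proof -
    have np: "real n > 0" using n by simp
    have tp: "\<tau> n > 0" using \<tau>pos n by simp
    have ss: "sqrt (G n / real n) * sqrt (real n / G n) = 1"
      using np Gp by (simp add: real_sqrt_mult[symmetric])
    have tc: "\<bar>t n\<bar> * c n = \<bar>\<theta>\<bar> * \<tau> n"
    proof -
      have "\<bar>t n\<bar> * c n = \<bar>\<theta>\<bar> * \<tau> n * (sqrt (G n / real n) * sqrt (real n / G n))"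
        unfolding t_def c_def using np Gp by (simp add: abs_mult)
      thus ?thesis using ss by simp
    qed
    have t2: "(t n)^2 = \<theta>^2 * G n / real n"
      unfolding t_def using np Gp by (simp add: power_mult_distrib)
    have nt: "real n * (t n)^2 / G n = \<theta>^2" using t2 np Gp by simp
    have me: "\<bar>z n - (t n)^2 * v n / 2\<bar> \<le> \<bar>\<theta>\<bar> * \<tau> n * ((t n)^2 * v n)"
      using mgf_expand[OF n, of "t n"] tc th unfolding z_def by simp
    have vc: "(t n)^2 * v n \<le> \<theta>^2 * (\<tau> n)^2"
    proof -
      have "(t n)^2 * v n \<le> (t n)^2 * (c n)^2" using v_le[OF n] by (intro mult_left_mono) auto
      also have "\<dots> = (\<bar>t n\<bar> * c n)^2" by (simp add: power_mult_distrib)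
      also have "\<dots> = \<theta>^2 * (\<tau> n)^2" using tc by (simp add: power_mult_distrib)
      finally show ?thesis .
    qed
    have tv0: "0 \<le> (t n)^2 * v n" using v_nonneg by simp
    have "\<bar>z n\<bar> \<le> (t n)^2 * v n / 2 + \<bar>\<theta>\<bar> * \<tau> n * ((t n)^2 * v n)" using me tv0 by linarith
    also have "\<dots> \<le> (t n)^2 * v n / 2 + 1 * ((t n)^2 * v n)" using th tv0 by (intro add_left_mono mult_right_mono) auto
    also have "\<dots> \<le> 3/2 * \<theta>^2 * (\<tau> n)^2" using vc by linarith
    finally have zb: "\<bar>z n\<bar> \<le> 3/2 * \<theta>^2 * (\<tau> n)^2" .
    have "real n / G n * (z n - (t n)^2 * v n / 2) = real n * z n / G n - (real n * (t n)^2 / G n) * v n / 2"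
      by (simp add: right_diff_distrib)
    also have "\<dots> = w n - \<theta>^2 * v n / 2" unfolding w_def nt ..
    finally have "w n - \<theta>^2 * v n / 2 = real n / G n * (z n - (t n)^2 * v n / 2)" ..
    hence "\<bar>w n - \<theta>^2 * v n / 2\<bar> = real n / G n * \<bar>z n - (t n)^2 * v n / 2\<bar>"
      using np Gp by (simp add: abs_mult)
    also have "\<dots> \<le> real n / G n * (\<bar>\<theta>\<bar> * \<tau> n * ((t n)^2 * v n))"
      using me np Gp by (intro mult_left_mono) auto
    also have "\<dots> = \<bar>\<theta>\<bar> * \<tau> n * v n * (real n * (t n)^2 / G n)" by simp
    also have "\<dots> = \<bar>\<theta>\<bar> * \<tau> n * v n * \<theta>^2" unfolding nt ..
    also have "\<dots> = \<bar>\<theta>\<bar>^3 * \<tau> n * v n" by (simp add: power2_eq_square power3_eq_cube)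
    finally have wb: "\<bar>w n - \<theta>^2 * v n / 2\<bar> \<le> \<bar>\<theta>\<bar>^3 * \<tau> n * v n" .
    have "E n \<theta> = mgf n (t n) ^ n"
      unfolding E_def using prod_mgf(1)[OF n, of "t n"] unfolding t_def by simp
    thus ?thesis using zb wb unfolding z_def by simp
  qed
  have vl: "(v \<longlongrightarrow> \<sigma>^2) sequentially" using var unfolding v_def .
  have w1: "((\<lambda>n. w n - \<theta>^2 * v n / 2) \<longlongrightarrow> 0) sequentially"
  proof (rule Lim_null_comparison)
    show "eventually (\<lambda>n. norm (w n - \<theta>^2 * v n / 2) \<le> \<bar>\<theta>\<bar>^3 * \<tau> n * v n) sequentially"
      using ev by eventually_elim (use facts in auto)
    show "((\<lambda>n. \<bar>\<theta>\<bar>^3 * \<tau> n * v n) \<longlongrightarrow> 0) sequentially"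
      using tendsto_mult[OF tendsto_mult[OF tendsto_const \<tau>lim] vl, of "\<bar>\<theta>\<bar>^3"] by simp
  qed
  have wl: "(w \<longlongrightarrow> \<theta>^2 * \<sigma>^2 / 2) sequentially"
  proof -
    have "((\<lambda>n. (w n - \<theta>^2 * v n / 2) + \<theta>^2/2 * v n) \<longlongrightarrow> 0 + \<theta>^2/2 * \<sigma>^2) sequentially"
      by (rule tendsto_add[OF w1 tendsto_mult[OF tendsto_const vl]])
    thus ?thesis by simp
  qed
  have zl: "(z \<longlongrightarrow> 0) sequentially"
  proof (rule Lim_null_comparison)
    show "eventually (\<lambda>n. norm (z n) \<le> 3/2 * \<theta>^2 * (\<tau> n)^2) sequentially"
      using ev by eventually_elim (use facts in auto)
    show "((\<lambda>n. 3/2 * \<theta>^2 * (\<tau> n)^2) \<longlongrightarrow> 0) sequentially"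
      using tendsto_mult[OF tendsto_const tendsto_power[OF \<tau>lim, of 2], of "3/2 * \<theta>^2"] by simp
  qed
  have ev2: "eventually (\<lambda>n. n \<ge> 2 \<and> G n > 0 \<and> \<bar>\<theta>\<bar> * \<tau> n \<le> 1 \<and> \<bar>z n\<bar> \<le> 1/2) sequentially"
  proof -
    have zz: "((\<lambda>n. \<bar>z n\<bar>) \<longlongrightarrow> 0) sequentially" using tendsto_rabs[OF zl] by simp
    have h: "(0::real) < 1/2" by simp
    have "eventually (\<lambda>n. \<bar>z n\<bar> < 1/2) sequentially" by (rule order_tendstoD(2)[OF zz h])
    with ev show ?thesis by eventually_elim auto
  qed
  have diff: "((\<lambda>n. ln (E n \<theta>) / G n - w n) \<longlongrightarrow> 0) sequentially"
  proof (rule Lim_null_comparison)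
    show "eventually (\<lambda>n. norm (ln (E n \<theta>) / G n - w n) \<le> 2 * (\<bar>w n\<bar> * \<bar>z n\<bar>)) sequentially"
      using ev2
    proof eventually_elim
      case (elim n)
      hence n: "n \<ge> 2" and Gp: "G n > 0" and zb: "\<bar>z n\<bar> \<le> 1/2" by auto
      have Ee: "E n \<theta> = (1 + z n) ^ n" using facts elim by auto
      have zp: "1 + z n > 0" using zb by linarith
      have "ln (E n \<theta>) / G n - w n = real n * ln (1 + z n) / G n - real n * z n / G n"
        unfolding Ee w_def using ln_realpow[of "1 + z n" n] by simp
      also have "\<dots> = real n / G n * (ln (1 + z n) - z n)" by (simp add: right_diff_distrib)
      finally have "ln (E n \<theta>) / G n - w n = real n / G n * (ln (1 + z n) - z n)" .
      hence "norm (ln (E n \<theta>) / G n - w n) = real n / G n * \<bar>ln (1 + z n) - z n\<bar>"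
        using Gp by (simp add: abs_mult)
      also have "\<dots> \<le> real n / G n * (2 * (z n)^2)"
        using abs_ln_one_plus_x_minus_x_bound[OF zb] Gp by (intro mult_left_mono) auto
      also have "\<dots> = 2 * (\<bar>w n\<bar> * \<bar>z n\<bar>)"
      proof -
        have "\<bar>w n\<bar> = real n / G n * \<bar>z n\<bar>" unfolding w_def using Gp by (simp add: abs_mult)
        moreover have "(z n)^2 = \<bar>z n\<bar> * \<bar>z n\<bar>" by (simp add: power2_eq_square)
        ultimately show ?thesis by simp
      qed
      finally show ?case .
    qed
    show "((\<lambda>n. 2 * (\<bar>w n\<bar> * \<bar>z n\<bar>)) \<longlongrightarrow> 0) sequentially"
      using tendsto_mult[OF tendsto_const tendsto_mult[OF tendsto_rabs[OF wl] tendsto_rabs[OF zl]], of 2] by simp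
  qed
  have "((\<lambda>n. (ln (E n \<theta>) / G n - w n) + w n) \<longlongrightarrow> 0 + \<theta>^2 * \<sigma>^2 / 2) sequentially"
    by (intro tendsto_intros diff wl)
  moreover have "eventually (\<lambda>n. E n \<theta> > 0) sequentially"
    using ev2
  proof eventually_elim
    case (elim n)
    hence "1 + z n > 0" by linarith
    moreover have "E n \<theta> = (1 + z n) ^ n" using facts elim by auto
    ultimately show ?case by simp
  qed
  ultimately show ?thesis by simp
qed




lemma int_lower:
  fixes Y :: "'a \<Rightarrow> real"
  assumes Ym: "Y \<in> borel_measurable M" and Yi: "\<And>k. integrable M (\<lambda>\<omega>. exp (k * Y \<omega>))"
    and lm: "0 \<le> l" "0 \<le> m" "a \<le> a'"
  shows "integral\<^sup>L M (\<lambda>\<omega>. exp (l * Y \<omega>)) - exp (m*a) * integral\<^sup>L M (\<lambda>\<omega>. exp ((l-m) * Y \<omega>))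
          - exp (-(m*a')) * integral\<^sup>L M (\<lambda>\<omega>. exp ((l+m) * Y \<omega>))
         \<le> exp (l*a') * measure M {\<omega>\<in>space M. Y \<omega> > a}"
proof -
  let ?A = "{\<omega>\<in>space M. Y \<omega> > a}"
  have A: "?A \<in> sets M" using Ym by measurable
  have iA: "integrable M (\<lambda>\<omega>. exp (l*a') * indicator ?A \<omega>)"
    using A by (intro integrable_mult_right) (simp add: emeasure_finite less_top[symmetric])
  have "integral\<^sup>L M (\<lambda>\<omega>. exp (l * Y \<omega>)) - exp (m*a) * integral\<^sup>L M (\<lambda>\<omega>. exp ((l-m) * Y \<omega>))
          - exp (-(m*a')) * integral\<^sup>L M (\<lambda>\<omega>. exp ((l+m) * Y \<omega>))
      = integral\<^sup>L M (\<lambda>\<omega>. exp (l*Y \<omega>) - exp (m*a) * exp ((l-m)*Y \<omega>) - exp (-(m*a')) * exp ((l+m)*Y \<omega>))"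
    using Yi by simp
  also have "\<dots> \<le> integral\<^sup>L M (\<lambda>\<omega>. exp (l*a') * indicator ?A \<omega>)"
  proof (rule integral_mono)
    show "integrable M (\<lambda>\<omega>. exp (l*Y \<omega>) - exp (m*a) * exp ((l-m)*Y \<omega>) - exp (-(m*a')) * exp ((l+m)*Y \<omega>))"
      using Yi by auto
    show "integrable M (\<lambda>\<omega>. exp (l*a') * indicator ?A \<omega>)" by (rule iA)
    fix \<omega> assume w: "\<omega> \<in> space M"
    then have "indicator ?A \<omega> = (indicator {x. x > a} (Y \<omega>) :: real)" by (simp add: indicator_def)
    with pointwise_lower[OF lm, of "Y \<omega>"]
    show "exp (l*Y \<omega>) - exp (m*a) * exp ((l-m)*Y \<omega>) - exp (-(m*a')) * exp ((l+m)*Y \<omega>)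
          \<le> exp (l*a') * indicator ?A \<omega>" by simp
  qed
  also have "\<dots> = exp (l*a') * measure M ?A" using A by (simp add: emeasure_finite less_top[symmetric])
  finally show ?thesis .
qed

lemma int_upper:
  fixes Y :: "'a \<Rightarrow> real"
  assumes Ym: "Y \<in> borel_measurable M" and Yi: "integrable M (\<lambda>\<omega>. exp (l * Y \<omega>))"
    and l: "0 \<le> l"
  shows "exp (l*a) * measure M {\<omega>\<in>space M. Y \<omega> > a} \<le> integral\<^sup>L M (\<lambda>\<omega>. exp (l * Y \<omega>))"
proof -
  let ?A = "{\<omega>\<in>space M. Y \<omega> > a}"
  have A: "?A \<in> sets M" using Ym by measurable
  have iA: "integrable M (\<lambda>\<omega>. exp (l*a) * indicator ?A \<omega>)"
    using A by (intro integrable_mult_right) (simp add: emeasure_finite less_top[symmetric])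
  have "exp (l*a) * measure M ?A = integral\<^sup>L M (\<lambda>\<omega>. exp (l*a) * indicator ?A \<omega>)"
    using A by (simp add: emeasure_finite less_top[symmetric])
  also have "\<dots> \<le> integral\<^sup>L M (\<lambda>\<omega>. exp (l * Y \<omega>))"
  proof (rule integral_mono[OF iA Yi])
    fix \<omega> assume w: "\<omega> \<in> space M"
    then have "indicator ?A \<omega> = (indicator {x. x > a} (Y \<omega>) :: real)" by (simp add: indicator_def)
    with pointwise_upper[OF l, of a "Y \<omega>"]
    show "exp (l*a) * indicator ?A \<omega> \<le> exp (l * Y \<omega>)" by simp
  qed
  finally show ?thesis .
qed

lemma S_meas:
  assumes n: "n \<ge> 2" shows "(\<lambda>\<omega>. s * S n \<omega>) \<in> borel_measurable M"
proof -
  have "(\<lambda>\<omega>. \<Sum>i\<in>{1..n}. X n i \<omega>) \<in> borel_measurable M"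
    using meas n by (intro borel_measurable_sum) auto
  thus ?thesis unfolding S_def by simp
qed

lemma S_meas1: "n \<ge> 2 \<Longrightarrow> S n \<in> borel_measurable M"
  using S_meas[of n 1] by simp

lemma S_int: "n \<ge> 2 \<Longrightarrow> integrable M (\<lambda>\<omega>. exp (k * (s * S n \<omega>)))"
  using prod_mgf(2)[where n=n and t="k * s"] by (simp add: mult.assoc)

lemma sqrt_GG: "n \<ge> 2 \<Longrightarrow> G n > 0 \<Longrightarrow> sqrt (G n / real n) * sqrt (real n * G n) = G n"
  by (simp add: real_sqrt_mult[symmetric])

lemma E_eq: "integral\<^sup>L M (\<lambda>\<omega>. exp (x * sqrt (G n / real n) * (s * S n \<omega>))) = E n (s * x)"
  unfolding E_def by (simp add: mult_ac)

lemma Lam: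
  "((\<lambda>n. ln (E n x) / G n) \<longlongrightarrow> x^2 * \<sigma>^2 / 2) sequentially"
  "eventually (\<lambda>n. E n x > 0) sequentially"
  using Lambda_lim[of x] by auto

lemma Lam_s:
  assumes s: "s = 1 \<or> s = -1"
  shows "((\<lambda>n. ln (E n (s * x)) / G n) \<longlongrightarrow> x^2 * \<sigma>^2 / 2) sequentially"
  using Lam(1)[of "s * x"] s by (auto simp: power_mult_distrib)

lemma ln2G: "((\<lambda>n. ln 2 / G n) \<longlongrightarrow> 0) sequentially"
  by (rule tendsto_divide_0[OF tendsto_const filterlim_at_top_imp_at_infinity[OF G_top]])

lemma lower:
  assumes r: "r > 0" and s: "s = 1 \<or> s = -1" and e: "e > 0"
  shows "eventually (\<lambda>n. measure M {\<omega>\<in>space M. s * S n \<omega> > r * sqrt (real n * G n)} > 0 \<and>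
            ln (measure M {\<omega>\<in>space M. s * S n \<omega> > r * sqrt (real n * G n)}) / G n > - (r^2) / (2 * \<sigma>^2) - e) sequentially"
proof -
  define \<epsilon> where "\<epsilon> = min r (\<sigma>^2 * e / (4 * r))"
  define \<theta> where "\<theta> = (r + \<epsilon>) / \<sigma>^2"
  define \<eta> where "\<eta> = \<epsilon> / \<sigma>^2"
  define r' where "r' = r + 2 * \<epsilon>"
  define \<kappa> where "\<kappa> = \<epsilon>^2 / (4 * \<sigma>^2)"
  define L where "L = - (r^2) / (2 * \<sigma>^2)"
  have sp: "\<sigma>^2 > 0" using \<sigma>pos by simp
  have \<epsilon>p: "\<epsilon> > 0" unfolding \<epsilon>_def using r e sp by simp
  have \<epsilon>r: "\<epsilon> \<le> r" unfolding \<epsilon>_def by simp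
  have \<epsilon>e: "\<epsilon> * (4 * r) \<le> \<sigma>^2 * e" unfolding \<epsilon>_def using r by (simp add: min_def field_simps)
  have \<kappa>p: "\<kappa> > 0" unfolding \<kappa>_def using \<epsilon>p sp by simp
  have \<theta>p: "\<theta> \<ge> 0" unfolding \<theta>_def using r \<epsilon>p sp by simp
  have \<eta>p: "\<eta> \<ge> 0" unfolding \<eta>_def using \<epsilon>p sp by simp
  have rr': "r \<le> r'" unfolding r'_def using \<epsilon>p by simp
  have v1: "\<eta> * r + (\<theta> - \<eta>)^2 * \<sigma>^2 / 2 - \<theta>^2 * \<sigma>^2 / 2 = - 2 * \<kappa>"
    unfolding \<theta>_def \<eta>_def \<kappa>_def using sp by (simp add: field_simps power2_eq_square)
  have v2: "- \<eta> * r' + (\<theta> + \<eta>)^2 * \<sigma>^2 / 2 - \<theta>^2 * \<sigma>^2 / 2 = - 2 * \<kappa>"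
    unfolding \<theta>_def \<eta>_def \<kappa>_def r'_def using sp by (simp add: field_simps power2_eq_square)
  have v3: "\<theta>^2 * \<sigma>^2 / 2 - 0 - \<theta> * r' = L - (4 * r * \<epsilon> + 3 * \<epsilon>^2) / (2 * \<sigma>^2)"
    unfolding \<theta>_def L_def r'_def using sp \<sigma>pos by (simp add: field_simps power2_eq_square)
  have v4: "(4 * r * \<epsilon> + 3 * \<epsilon>^2) / (2 * \<sigma>^2) < e"
  proof -
    have "3 * \<epsilon>^2 \<le> 3 * (r * \<epsilon>)" using \<epsilon>r \<epsilon>p by (simp add: power2_eq_square)
    hence "4 * r * \<epsilon> + 3 * \<epsilon>^2 \<le> 7 * (\<epsilon> * r)" by (simp add: algebra_simps)
    also have "\<dots> \<le> 7/4 * (\<sigma>^2 * e)" using \<epsilon>e by (simp add: mult_ac)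
    also have "\<dots> < 2 * \<sigma>^2 * e" using sp e by simp
    finally show ?thesis using sp by (simp add: field_simps)
  qed
  note L0 = Lam_s[OF s, of \<theta>] and Lm = Lam_s[OF s, of "\<theta> - \<eta>"] and Lp = Lam_s[OF s, of "\<theta> + \<eta>"]
  have b1: "((\<lambda>n. \<eta> * r + ln (E n (s * (\<theta> - \<eta>))) / G n - ln (E n (s * \<theta>)) / G n) \<longlongrightarrow> - 2 * \<kappa>) sequentially"
    using tendsto_diff[OF tendsto_add[OF tendsto_const Lm] L0, of "\<eta> * r"] v1 by simp
  have b2: "((\<lambda>n. - \<eta> * r' + ln (E n (s * (\<theta> + \<eta>))) / G n - ln (E n (s * \<theta>)) / G n) \<longlongrightarrow> - 2 * \<kappa>) sequentially"
    using tendsto_diff[OF tendsto_add[OF tendsto_const Lp] L0, of "- \<eta> * r'"] v2 by simp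
  have b3: "((\<lambda>n. ln (E n (s * \<theta>)) / G n - ln 2 / G n - \<theta> * r') \<longlongrightarrow> L - (4 * r * \<epsilon> + 3 * \<epsilon>^2) / (2 * \<sigma>^2)) sequentially"
    using tendsto_diff[OF tendsto_diff[OF L0 ln2G] tendsto_const, of "\<theta> * r'"] v3 by simp
  have k2: "- 2 * \<kappa> < - \<kappa>" using \<kappa>p by simp
  have v5: "L - e < L - (4 * r * \<epsilon> + 3 * \<epsilon>^2) / (2 * \<sigma>^2)" using v4 by simp
  have ev: "eventually (\<lambda>n. n \<ge> 2 \<and> G n > 0 \<and> E n (s * \<theta>) > 0 \<and> E n (s * (\<theta> - \<eta>)) > 0 \<and> E n (s * (\<theta> + \<eta>)) > 0
      \<and> \<eta> * r + ln (E n (s * (\<theta> - \<eta>))) / G n - ln (E n (s * \<theta>)) / G n < - \<kappa>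
      \<and> - \<eta> * r' + ln (E n (s * (\<theta> + \<eta>))) / G n - ln (E n (s * \<theta>)) / G n < - \<kappa>
      \<and> G n > ln 4 / \<kappa>
      \<and> ln (E n (s * \<theta>)) / G n - ln 2 / G n - \<theta> * r' > L - e) sequentially"
    using eventually_ge_at_top[of 2] G_pos Lam(2)[of "s * \<theta>"] Lam(2)[of "s * (\<theta> - \<eta>)"] Lam(2)[of "s * (\<theta> + \<eta>)"]
      order_tendstoD(2)[OF b1 k2] order_tendstoD(2)[OF b2 k2]
      G_top[unfolded filterlim_at_top_dense, rule_format, of "ln 4 / \<kappa>"]
      order_tendstoD(1)[OF b3 v5]
    by eventually_elim auto
  show ?thesis
    using ev
  proof eventually_elim
    case (elim n)
    hence n: "n \<ge> 2" and Gp: "G n > 0" and E0: "E n (s * \<theta>) > 0" and Em: "E n (s * (\<theta> - \<eta>)) > 0"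
      and Ep: "E n (s * (\<theta> + \<eta>)) > 0"
      and c1: "\<eta> * r + ln (E n (s * (\<theta> - \<eta>))) / G n - ln (E n (s * \<theta>)) / G n < - \<kappa>"
      and c2: "- \<eta> * r' + ln (E n (s * (\<theta> + \<eta>))) / G n - ln (E n (s * \<theta>)) / G n < - \<kappa>"
      and c3: "G n > ln 4 / \<kappa>"
      and c4: "ln (E n (s * \<theta>)) / G n - ln 2 / G n - \<theta> * r' > L - e" by auto
    define q where "q = sqrt (G n / real n)"
    define h where "h = sqrt (real n * G n)"
    have qh: "q * h = G n" unfolding q_def h_def using sqrt_GG[OF n Gp] .
    have qp: "q \<ge> 0" unfolding q_def using Gp by simp
    have hp: "h \<ge> 0" unfolding h_def using Gp by simp
    define P where "P = measure M {\<omega>\<in>space M. s * S n \<omega> > r * h}"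
    have il: "integral\<^sup>L M (\<lambda>\<omega>. exp ((\<theta> * q) * (s * S n \<omega>))) - exp ((\<eta> * q) * (r * h)) * integral\<^sup>L M (\<lambda>\<omega>. exp ((\<theta> * q - \<eta> * q) * (s * S n \<omega>)))
          - exp (-((\<eta> * q) * (r' * h))) * integral\<^sup>L M (\<lambda>\<omega>. exp ((\<theta> * q + \<eta> * q) * (s * S n \<omega>)))
         \<le> exp ((\<theta> * q) * (r' * h)) * P"
      unfolding P_def
      by (rule int_lower[OF S_meas[OF n] S_int[OF n]]) (use \<theta>p \<eta>p qp rr' r hp mult_right_mono[OF rr' hp] in auto)
    have i0: "integral\<^sup>L M (\<lambda>\<omega>. exp ((\<theta> * q) * (s * S n \<omega>))) = E n (s * \<theta>)"
      using E_eq[of \<theta> n s] unfolding q_def by (simp add: mult_ac)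
    have im: "integral\<^sup>L M (\<lambda>\<omega>. exp ((\<theta> * q - \<eta> * q) * (s * S n \<omega>))) = E n (s * (\<theta> - \<eta>))"
      using E_eq[of "\<theta> - \<eta>" n s] unfolding q_def by (simp add: algebra_simps)
    have ip: "integral\<^sup>L M (\<lambda>\<omega>. exp ((\<theta> * q + \<eta> * q) * (s * S n \<omega>))) = E n (s * (\<theta> + \<eta>))"
      using E_eq[of "\<theta> + \<eta>" n s] unfolding q_def by (simp add: algebra_simps)
    have x1: "(\<eta> * q) * (r * h) = \<eta> * r * G n" using qh by (simp add: mult_ac)
    have x2: "(\<eta> * q) * (r' * h) = \<eta> * r' * G n" using qh by (simp add: mult_ac)
    have x3: "(\<theta> * q) * (r' * h) = \<theta> * r' * G n" using qh by (simp add: mult_ac)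
    have main: "E n (s * \<theta>) - exp (\<eta> * r * G n) * E n (s * (\<theta> - \<eta>)) - exp (- (\<eta> * r' * G n)) * E n (s * (\<theta> + \<eta>))
        \<le> exp (\<theta> * r' * G n) * P"
      using il unfolding i0 im ip x1 x2 x3 .
    have l4: "ln 4 < \<kappa> * G n" using c3 \<kappa>p by (simp add: field_simps)
    have t1: "exp (\<eta> * r * G n) * E n (s * (\<theta> - \<eta>)) \<le> E n (s * \<theta>) / 4"
    proof -
      have "\<eta> * r * G n + ln (E n (s * (\<theta> - \<eta>))) - ln (E n (s * \<theta>)) < - \<kappa> * G n"
      proof -
        have "G n * (\<eta> * r + ln (E n (s * (\<theta> - \<eta>))) / G n - ln (E n (s * \<theta>)) / G n) < G n * (- \<kappa>)"
          using c1 Gp by (intro mult_strict_left_mono) auto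
        thus ?thesis using Gp by (simp add: algebra_simps)
      qed
      hence "\<eta> * r * G n + ln (E n (s * (\<theta> - \<eta>))) \<le> ln (E n (s * \<theta>)) - ln 4" using l4 by linarith
      hence "exp (\<eta> * r * G n + ln (E n (s * (\<theta> - \<eta>)))) \<le> exp (ln (E n (s * \<theta>)) - ln 4)" by simp
      thus ?thesis using Em E0 by (simp add: exp_add exp_diff)
    qed
    have t2: "exp (- (\<eta> * r' * G n)) * E n (s * (\<theta> + \<eta>)) \<le> E n (s * \<theta>) / 4"
    proof -
      have "- \<eta> * r' * G n + ln (E n (s * (\<theta> + \<eta>))) - ln (E n (s * \<theta>)) < - \<kappa> * G n"
      proof -
        have "G n * (- \<eta> * r' + ln (E n (s * (\<theta> + \<eta>))) / G n - ln (E n (s * \<theta>)) / G n) < G n * (- \<kappa>)"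
          using c2 Gp by (intro mult_strict_left_mono) auto
        thus ?thesis using Gp by (simp add: algebra_simps)
      qed
      hence "- (\<eta> * r' * G n) + ln (E n (s * (\<theta> + \<eta>))) \<le> ln (E n (s * \<theta>)) - ln 4" using l4 by linarith
      hence "exp (- (\<eta> * r' * G n) + ln (E n (s * (\<theta> + \<eta>)))) \<le> exp (ln (E n (s * \<theta>)) - ln 4)" by simp
      thus ?thesis using Ep E0 by (simp add: exp_add exp_diff exp_minus field_simps)
    qed
    have half: "E n (s * \<theta>) / 2 \<le> exp (\<theta> * r' * G n) * P" using main t1 t2 by linarith
    have pos: "exp (\<theta> * r' * G n) * P > 0" using half E0 by linarith
    hence Pp: "P > 0" by (simp add: zero_less_mult_iff)
    have "ln (E n (s * \<theta>) / 2) \<le> ln (exp (\<theta> * r' * G n) * P)"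
      using half E0 by (subst ln_le_cancel_iff) auto
    hence "ln (E n (s * \<theta>)) - ln 2 \<le> \<theta> * r' * G n + ln P"
      using E0 Pp by (simp add: ln_div ln_mult)
    hence "(ln (E n (s * \<theta>)) - ln 2 - \<theta> * r' * G n) / G n \<le> ln P / G n"
      using Gp by (intro divide_right_mono) auto
    moreover have "(ln (E n (s * \<theta>)) - ln 2 - \<theta> * r' * G n) / G n = ln (E n (s * \<theta>)) / G n - ln 2 / G n - \<theta> * r'"
      using Gp by (simp add: diff_divide_distrib)
    ultimately have "ln (E n (s * \<theta>)) / G n - ln 2 / G n - \<theta> * r' \<le> ln P / G n" by simp
    hence "ln P / G n > L - e" using c4 by linarith
    thus ?case using Pp unfolding P_def h_def L_def by simp
  qed
qed

lemma upper:
  assumes r: "r > 0" and e: "e > 0"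
  shows "eventually (\<lambda>n. \<forall>A. A \<in> sets M \<longrightarrow> A \<subseteq> {\<omega>\<in>space M. \<bar>S n \<omega>\<bar> > r * sqrt (real n * G n)} \<longrightarrow>
            measure M A > 0 \<longrightarrow> ln (measure M A) / G n < - (r^2) / (2 * \<sigma>^2) + e) sequentially"
proof -
  define \<theta> where "\<theta> = r / \<sigma>^2"
  define L where "L = - (r^2) / (2 * \<sigma>^2)"
  define q0 where "q0 = \<theta>^2 * \<sigma>^2 / 2"
  have sp: "\<sigma>^2 > 0" using \<sigma>pos by simp
  have \<theta>p: "\<theta> \<ge> 0" unfolding \<theta>_def using r sp by simp
  have vq: "q0 - \<theta> * r = L" unfolding q0_def \<theta>_def L_def using \<sigma>pos by (simp add: field_simps power2_eq_square)
  have e3: "q0 < q0 + e/3" "(0::real) < e/3" using e by auto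
  have ev: "eventually (\<lambda>n. n \<ge> 2 \<and> G n > 0 \<and> E n \<theta> > 0 \<and> E n (-\<theta>) > 0 \<and>
      ln (E n \<theta>) / G n < q0 + e/3 \<and> ln (E n (-\<theta>)) / G n < q0 + e/3 \<and> ln 2 / G n < e/3) sequentially"
    using eventually_ge_at_top[of 2] G_pos Lam(2)[of \<theta>] Lam(2)[of "-\<theta>"]
      order_tendstoD(2)[OF Lam(1)[of \<theta>, folded q0_def] e3(1)]
      order_tendstoD(2)[OF Lam(1)[of "-\<theta>", simplified, folded q0_def] e3(1)]
      order_tendstoD(2)[OF ln2G e3(2)]
    by eventually_elim auto
  show ?thesis using ev
  proof eventually_elim
    case (elim n)
    hence n: "n \<ge> 2" and Gp: "G n > 0" and Ea: "E n \<theta> > 0" and Eb: "E n (-\<theta>) > 0"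
      and ca: "ln (E n \<theta>) / G n < q0 + e/3" and cb: "ln (E n (-\<theta>)) / G n < q0 + e/3"
      and c2: "ln 2 / G n < e/3" by auto
    define q where "q = sqrt (G n / real n)"
    define h where "h = sqrt (real n * G n)"
    have qh: "q * h = G n" unfolding q_def h_def using sqrt_GG[OF n Gp] .
    have qp: "q \<ge> 0" unfolding q_def using Gp by simp
    have lp: "\<theta> * q \<ge> 0" using \<theta>p qp by simp
    have x: "(\<theta> * q) * (r * h) = \<theta> * r * G n" using qh by (simp add: mult_ac)
    let ?B1 = "{\<omega>\<in>space M. 1 * S n \<omega> > r * h}"
    let ?B2 = "{\<omega>\<in>space M. (-1) * S n \<omega> > r * h}"
    have u1: "exp ((\<theta> * q) * (r * h)) * measure M ?B1 \<le> integral\<^sup>L M (\<lambda>\<omega>. exp ((\<theta> * q) * (1 * S n \<omega>)))"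
      by (rule int_upper[OF S_meas[OF n] S_int[OF n] lp])
    have u2: "exp ((\<theta> * q) * (r * h)) * measure M ?B2 \<le> integral\<^sup>L M (\<lambda>\<omega>. exp ((\<theta> * q) * ((-1) * S n \<omega>)))"
      by (rule int_upper[OF S_meas[OF n] S_int[OF n] lp])
    have i1: "integral\<^sup>L M (\<lambda>\<omega>. exp ((\<theta> * q) * (1 * S n \<omega>))) = E n \<theta>"
      using E_eq[of \<theta> n 1] unfolding q_def by (simp add: mult_ac)
    have i2: "integral\<^sup>L M (\<lambda>\<omega>. exp ((\<theta> * q) * ((-1) * S n \<omega>))) = E n (-\<theta>)"
      using E_eq[of \<theta> n "-1"] unfolding q_def by (simp add: mult_ac)
    have B1: "?B1 \<in> sets M" and B2: "?B2 \<in> sets M" using S_meas[OF n, of 1] S_meas[OF n, of "-1"] by measurable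
    have ea: "E n \<theta> < exp (G n * (q0 + e/3))"
    proof -
      have "ln (E n \<theta>) < G n * (q0 + e/3)" using ca Gp by (simp add: field_simps)
      hence "exp (ln (E n \<theta>)) < exp (G n * (q0 + e/3))" by simp
      thus ?thesis using Ea by simp
    qed
    have eb: "E n (-\<theta>) < exp (G n * (q0 + e/3))"
    proof -
      have "ln (E n (-\<theta>)) < G n * (q0 + e/3)" using cb Gp by (simp add: field_simps)
      hence "exp (ln (E n (-\<theta>))) < exp (G n * (q0 + e/3))" by simp
      thus ?thesis using Eb by simp
    qed
    show ?case
    proof (intro allI impI)
      fix A assume A: "A \<in> sets M" and sub: "A \<subseteq> {\<omega>\<in>space M. \<bar>S n \<omega>\<bar> > r * sqrt (real n * G n)}"
        and Ap: "measure M A > 0"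
      have "A \<subseteq> ?B1 \<union> ?B2" using sub unfolding h_def by auto
      hence "measure M A \<le> measure M (?B1 \<union> ?B2)" using B1 B2 by (intro finite_measure_mono) auto
      also have "\<dots> \<le> measure M ?B1 + measure M ?B2" using B1 B2 by (intro measure_subadditive) (auto simp: emeasure_finite)
      finally have mA: "measure M A \<le> measure M ?B1 + measure M ?B2" .
      have "exp (\<theta> * r * G n) * measure M A \<le> exp (\<theta> * r * G n) * (measure M ?B1 + measure M ?B2)"
        using mA by (intro mult_left_mono) auto
      also have "\<dots> \<le> E n \<theta> + E n (-\<theta>)" using u1 u2 unfolding i1 i2 x by (simp add: distrib_left)
      also have "\<dots> < 2 * exp (G n * (q0 + e/3))" using ea eb by simp
      finally have bb: "exp (\<theta> * r * G n) * measure M A < 2 * exp (G n * (q0 + e/3))" .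
      have "ln (exp (\<theta> * r * G n) * measure M A) < ln (2 * exp (G n * (q0 + e/3)))"
        using bb Ap by (subst ln_less_cancel_iff) auto
      hence "\<theta> * r * G n + ln (measure M A) < ln 2 + G n * (q0 + e/3)"
        using Ap by (simp add: ln_mult)
      hence "ln (measure M A) < ln 2 + G n * (q0 + e/3 - \<theta> * r)" by (simp add: algebra_simps)
      hence "ln (measure M A) / G n < (ln 2 + G n * (q0 + e/3 - \<theta> * r)) / G n"
        using Gp by (intro divide_strict_right_mono) auto
      also have "\<dots> = ln 2 / G n + (q0 + e/3 - \<theta> * r)" using Gp by (simp add: add_divide_distrib)
      finally have "ln (measure M A) / G n < ln 2 / G n + (q0 + e/3 - \<theta> * r)" .
      thus "ln (measure M A) / G n < - (r^2) / (2 * \<sigma>^2) + e" using c2 vq e unfolding L_def by linarith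
    qed
  qed
qed

end

theorem lemma3p4:
  fixes M :: "'a measure" and X :: "nat \<Rightarrow> nat \<Rightarrow> 'a \<Rightarrow> real"
    and \<sigma> \<rho> :: real and g :: "real \<Rightarrow> real" and \<tau> :: "nat \<Rightarrow> real"
  assumes P: "prob_space M"
    and meas: "\<And>n i. n \<ge> 2 \<Longrightarrow> i \<in> {1..n} \<Longrightarrow> X n i \<in> borel_measurable M"
    and indep: "\<And>n. n \<ge> 2 \<Longrightarrow> prob_space.indep_vars M (\<lambda>_. borel) (X n) {1..n}"
    and ident: "\<And>n i. n \<ge> 2 \<Longrightarrow> i \<in> {1..n} \<Longrightarrow> distr M borel (X n i) = distr M borel (X n 1)"
    and mean0: "\<And>n. n \<ge> 2 \<Longrightarrow> integral\<^sup>L M (X n 1) = 0"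
    and var: "((\<lambda>n. integral\<^sup>L M (\<lambda>\<omega>. (X n 1 \<omega>)\<^sup>2)) \<longlongrightarrow> \<sigma>\<^sup>2) sequentially"
    and \<sigma>pos: "\<sigma> > 0"
    and \<rho>: "\<rho> \<ge> 0"
    and g: "regvar_class \<rho> g"
    and \<tau>pos: "\<And>n. n \<ge> 2 \<Longrightarrow> \<tau> n > 0"
    and \<tau>lim: "\<tau> \<longlonglongrightarrow> 0"
    and bound: "\<And>n. n \<ge> 2 \<Longrightarrow>
                  AE \<omega> in M. \<bar>X n 1 \<omega>\<bar> \<le> \<tau> n * sqrt (real n / g (ln (real n)))"
    and r: "r > (0::real)"
  shows "((\<lambda>n. ln (measure M {\<omega> \<in> space M. (\<Sum>i=1..n. X n i \<omega>) > r * sqrt (real n * g (ln (real n)))})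
                / g (ln (real n))) \<longlongrightarrow> - r\<^sup>2 / (2 * \<sigma>\<^sup>2)) sequentially
       \<and> ((\<lambda>n. ln (measure M {\<omega> \<in> space M. (\<Sum>i=1..n. X n i \<omega>) < - r * sqrt (real n * g (ln (real n)))})
                / g (ln (real n))) \<longlongrightarrow> - r\<^sup>2 / (2 * \<sigma>\<^sup>2)) sequentially
       \<and> ((\<lambda>n. ln (measure M {\<omega> \<in> space M. \<bar>\<Sum>i=1..n. X n i \<omega>\<bar> > r * sqrt (real n * g (ln (real n)))})
                / g (ln (real n))) \<longlongrightarrow> - r\<^sup>2 / (2 * \<sigma>\<^sup>2)) sequentially"
proof -
  interpret mdp M X \<sigma> \<rho> g \<tau>
    by (rule mdp.intro[OF P meas indep ident mean0 var \<sigma>pos g \<tau>pos \<tau>lim bound])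
  define L where "L = - (r^2) / (2 * \<sigma>^2)"
  define Pp where "Pp n = measure M {\<omega> \<in> space M. S n \<omega> > r * sqrt (real n * G n)}" for n
  define Pm where "Pm n = measure M {\<omega> \<in> space M. S n \<omega> < - r * sqrt (real n * G n)}" for n
  define Pa where "Pa n = measure M {\<omega> \<in> space M. \<bar>S n \<omega>\<bar> > r * sqrt (real n * G n)}" for n
  have lowp: "eventually (\<lambda>n. Pp n > 0 \<and> ln (Pp n) / G n > L - e) sequentially" if e: "e > 0" for e
    using lower[OF r _ e, of 1] unfolding Pp_def L_def by simp
  have lowm: "eventually (\<lambda>n. Pm n > 0 \<and> ln (Pm n) / G n > L - e) sequentially" if e: "e > 0" for e
  proof -
    have "{\<omega> \<in> space M. (-1) * S n \<omega> > r * sqrt (real n * G n)} = {\<omega> \<in> space M. S n \<omega> < - r * sqrt (real n * G n)}" for n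
      by auto
    thus ?thesis using lower[OF r _ e, of "-1"] unfolding Pm_def L_def by simp
  qed
  have lowa: "eventually (\<lambda>n. Pa n > 0 \<and> ln (Pa n) / G n > L - e) sequentially" if e: "e > 0" for e
    using lowp[OF e] G_pos eventually_ge_at_top[of 2]
  proof eventually_elim
    case (elim n)
    have sub: "{\<omega> \<in> space M. S n \<omega> > r * sqrt (real n * G n)} \<subseteq> {\<omega> \<in> space M. \<bar>S n \<omega>\<bar> > r * sqrt (real n * G n)}"
      by auto
    have Aset: "{\<omega> \<in> space M. \<bar>S n \<omega>\<bar> > r * sqrt (real n * G n)} \<in> sets M"
      using S_meas1[OF elim(3)] by measurable
    have le: "Pp n \<le> Pa n" unfolding Pp_def Pa_def using sub Aset by (intro finite_measure_mono) auto
    hence "Pa n > 0" using elim by linarith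
    moreover have "ln (Pp n) \<le> ln (Pa n)" using le elim by simp
    hence "ln (Pp n) / G n \<le> ln (Pa n) / G n" using elim by (intro divide_right_mono) auto
    ultimately show ?case using elim by auto
  qed
  have upp: "eventually (\<lambda>n. \<forall>A. A \<in> sets M \<longrightarrow> A \<subseteq> {\<omega>\<in>space M. \<bar>S n \<omega>\<bar> > r * sqrt (real n * G n)} \<longrightarrow>
            measure M A > 0 \<longrightarrow> ln (measure M A) / G n < L + e) sequentially" if e: "e > 0" for e
    using upper[OF r e] unfolding L_def .
  have tp: "((\<lambda>n. ln (Pp n) / G n) \<longlongrightarrow> L) sequentially"
  proof (rule order_tendstoI)
    fix a assume "a < L"
    hence "L - a > 0" by simp
    from lowp[OF this] show "eventually (\<lambda>n. a < ln (Pp n) / G n) sequentially" by eventually_elim auto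
  next
    fix a assume "L < a"
    hence "a - L > 0" by simp
    from upp[OF this] lowp[OF this] eventually_ge_at_top[of 2]
    show "eventually (\<lambda>n. ln (Pp n) / G n < a) sequentially"
    proof eventually_elim
      case (elim n)
      have A: "{\<omega> \<in> space M. S n \<omega> > r * sqrt (real n * G n)} \<in> sets M"
        using S_meas1[OF elim(3)] by measurable
      have "{\<omega> \<in> space M. S n \<omega> > r * sqrt (real n * G n)} \<subseteq> {\<omega>\<in>space M. \<bar>S n \<omega>\<bar> > r * sqrt (real n * G n)}" by auto
      with elim(1) A elim(2) show ?case unfolding Pp_def by auto
    qed
  qed
  have tm: "((\<lambda>n. ln (Pm n) / G n) \<longlongrightarrow> L) sequentially"
  proof (rule order_tendstoI)
    fix a assume "a < L"
    hence "L - a > 0" by simp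
    from lowm[OF this] show "eventually (\<lambda>n. a < ln (Pm n) / G n) sequentially" by eventually_elim auto
  next
    fix a assume "L < a"
    hence "a - L > 0" by simp
    from upp[OF this] lowm[OF this] eventually_ge_at_top[of 2]
    show "eventually (\<lambda>n. ln (Pm n) / G n < a) sequentially"
    proof eventually_elim
      case (elim n)
      have A: "{\<omega> \<in> space M. S n \<omega> < - r * sqrt (real n * G n)} \<in> sets M"
        using S_meas1[OF elim(3)] by measurable
      have "{\<omega> \<in> space M. S n \<omega> < - r * sqrt (real n * G n)} \<subseteq> {\<omega>\<in>space M. \<bar>S n \<omega>\<bar> > r * sqrt (real n * G n)}" by auto
      with elim(1) A elim(2) show ?case unfolding Pm_def by auto
    qed
  qed
  have ta: "((\<lambda>n. ln (Pa n) / G n) \<longlongrightarrow> L) sequentially"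
  proof (rule order_tendstoI)
    fix a assume "a < L"
    hence "L - a > 0" by simp
    from lowa[OF this] show "eventually (\<lambda>n. a < ln (Pa n) / G n) sequentially" by eventually_elim auto
  next
    fix a assume "L < a"
    hence "a - L > 0" by simp
    from upp[OF this] lowa[OF this] eventually_ge_at_top[of 2]
    show "eventually (\<lambda>n. ln (Pa n) / G n < a) sequentially"
    proof eventually_elim
      case (elim n)
      have A: "{\<omega> \<in> space M. \<bar>S n \<omega>\<bar> > r * sqrt (real n * G n)} \<in> sets M"
        using S_meas1[OF elim(3)] by measurable
      with elim(1) elim(2) show ?case unfolding Pa_def by auto
    qed
  qed
  show ?thesis using tp tm ta unfolding Pp_def Pm_def Pa_def L_def S_def G_def by simp
qed

end
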